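(* Let $g>0$, $\varepsilon>0$, $\lambda_0>0$, $\nu_0>0$ be constants. For each $N\ge 1$ define the constants $\Gamma^N,\Phi^N,\Omega^N,\Lambda^N$ and the maps $A^N,S^N$ as in the context below. Then for every $N\ge 2$ the reduced shallow water moment system of order $N$, $\partial_tU+A^N(U)\partial_xU=S^N(U)$ with $U=(h,hu_m)$, is identical to that of order $2$: that is, $A^N(U)=A^2(U)$ and $S^N(U)=S^2(U)$ for all $h>0$, $u_m\in\mathbb{R}$ (equivalently, $\Gamma^N=\Gamma^2$, $\Phi^N=\Phi^2$, $\Omega^N=\Omega^2$ and $\Lambda^N=\Lambda^2$).
   Context: Let $\phi_j(\zeta)=\frac{1}{j!}\frac{\mathrm{d}^j}{\mathrm{d}\zeta^j}(\zeta-\zeta^2)^j$ (scaled Legendre polynomials on $[0,1]$). For $N\ge1$ let $\boldsymbol{C}_N\in\mathbb{R}^{N\times N}$ have entries $C_{ij}=\int_0^1\phi_i'(\zeta)\phi_j'(\zeta)\,\mathrm{d}\zeta$, and let $\widetilde{\boldsymbol{C}}_N$ have entries $(\widetilde{\boldsymbol{C}}_N)_{ij}=(2i+1)C_{ij}$, $i,j=1,\dots,N$; $\boldsymbol{C}_N$ (hence $\widetilde{\boldsymbol{C}}_N$) is invertible. Define, for $i=1,\dots,N$, $\widetilde B_i^{(N)}=\sum_{j=1}^N(\boldsymbol{C}_N^{-1})_{ij}$, $\widetilde F_i^{(N)}=\sum_{j=1}^N(\widetilde{\boldsymbol{C}}_N^{-1}\boldsymbol{C}_N^{-1})_{ij}$,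 $\widetilde D_i^{(N)}=-\sum_{j=1}^N(\widetilde{\boldsymbol{C}}_N^{-1}\boldsymbol{C}_N^{-1})_{ij}+\Big(\sum_{k,l=1}^N(\boldsymbol{C}_N^{-1})_{kl}\Big)\Big(\sum_{j=1}^N(\boldsymbol{C}_N^{-1})_{ij}\Big)$, and $\Gamma^N=\sum_{j=1}^N\frac{(\widetilde B_j^{(N)})^2}{2j+1}$, $\Phi^N=\sum_{j=1}^N\widetilde F_j^{(N)}$, $\Omega^N=\sum_{j=1}^N\widetilde B_j^{(N)}$, $\Lambda^N=\sum_{j=1}^N\widetilde D_j^{(N)}$. For $U=(h,hu_m)$ with $h>0$, $u_m\in\mathbb{R}$, set \[A^N(U)=\begin{pmatrix}0&1\\ -u_m^2\big(1-\frac{\varepsilon^2h^2}{\lambda_0^2}\Gamma^N\big)+gh\big(1-\frac{\varepsilon^2h^2}{\lambda_0\nu_0}\Phi^N\big) & 2u_m\big(1+\frac{\varepsilon^2h^2}{\lambda_0^2}\Gamma^N\big)\end{pmatrix},\] \[S^N(U)=\begin{pmatrix}0\\ -\frac{\nu_0}{\lambda_0}u_m\big(1-\frac{\varepsilon}{\lambda_0}\Omega^Nh+\frac{\varepsilon^2}{\lambda_0^2}\Lambda^Nh^2\big)\end{pmatrix}.\] The system $\partial_tU+A^N(U)\partial_xU=S^N(U)$ is called the reduced shallow water moment equations (RSWME) of order $N$. *)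

theory Defs
  imports "HOL-Analysis.Analysis" "HOL-Computational_Algebra.Polynomial"
begin

text \<open>Scaled Legendre polynomials on [0,1]: phi_j = (1/j!) d^j/dz^j (z - z^2)^j.\<close>
definition phi :: "nat \<Rightarrow> real poly" where
  "phi j = smult (1 / fact j) ((pderiv ^^ j) ([:0, 1, -1:] ^ j))"

definition Cent :: "nat \<Rightarrow> nat \<Rightarrow> real" where
  "Cent i j = integral {0..1} (\<lambda>z. poly (pderiv (phi i)) z * poly (pderiv (phi j)) z)"

text \<open>Matrices of size N x N are represented as functions nat => nat => real,
  indexed by {1..N}, with entries outside {1..N} x {1..N} irrelevant.\<close>
definition mat_inv :: "nat \<Rightarrow> (nat \<Rightarrow> nat \<Rightarrow> real) \<Rightarrow> (nat \<Rightarrow> nat \<Rightarrow> real)" where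
  "mat_inv N M = (THE X. (\<forall>i j. (i \<notin> {1..N} \<or> j \<notin> {1..N}) \<longrightarrow> X i j = 0) \<and>
      (\<forall>i\<in>{1..N}. \<forall>j\<in>{1..N}. (\<Sum>k=1..N. M i k * X k j) = (if i = j then 1 else 0)))"

definition mat_mul :: "nat \<Rightarrow> (nat \<Rightarrow> nat \<Rightarrow> real) \<Rightarrow> (nat \<Rightarrow> nat \<Rightarrow> real) \<Rightarrow> (nat \<Rightarrow> nat \<Rightarrow> real)" where
  "mat_mul N M P = (\<lambda>i j. \<Sum>k=1..N. M i k * P k j)"

definition Cmat :: "nat \<Rightarrow> nat \<Rightarrow> real" where
  "Cmat = Cent"

definition Ctilde :: "nat \<Rightarrow> nat \<Rightarrow> real" where
  "Ctilde i j = (2 * real i + 1) * Cent i j"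

definition Cinv :: "nat \<Rightarrow> nat \<Rightarrow> nat \<Rightarrow> real" where
  "Cinv N = mat_inv N Cmat"

definition Ctinv :: "nat \<Rightarrow> nat \<Rightarrow> nat \<Rightarrow> real" where
  "Ctinv N = mat_inv N Ctilde"

definition Btil :: "nat \<Rightarrow> nat \<Rightarrow> real" where
  "Btil N i = (\<Sum>j=1..N. Cinv N i j)"

definition Ftil :: "nat \<Rightarrow> nat \<Rightarrow> real" where
  "Ftil N i = (\<Sum>j=1..N. mat_mul N (Ctinv N) (Cinv N) i j)"

definition Dtil :: "nat \<Rightarrow> nat \<Rightarrow> real" where
  "Dtil N i = - (\<Sum>j=1..N. mat_mul N (Ctinv N) (Cinv N) i j)
     + (\<Sum>k=1..N. \<Sum>l=1..N. Cinv N k l) * (\<Sum>j=1..N. Cinv N i j)"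

definition Gam :: "nat \<Rightarrow> real" where
  "Gam N = (\<Sum>j=1..N. (Btil N j)\<^sup>2 / (2 * real j + 1))"

definition Phi :: "nat \<Rightarrow> real" where
  "Phi N = (\<Sum>j=1..N. Ftil N j)"

definition Omg :: "nat \<Rightarrow> real" where
  "Omg N = (\<Sum>j=1..N. Btil N j)"

definition Lam :: "nat \<Rightarrow> real" where
  "Lam N = (\<Sum>j=1..N. Dtil N j)"

definition AN :: "nat \<Rightarrow> real \<Rightarrow> real \<Rightarrow> real \<Rightarrow> real \<Rightarrow> real \<Rightarrow> real \<Rightarrow> real ^ 2 ^ 2" where
  "AN N g eps lam0 nu0 h um = vector [vector [0, 1],
     vector [- um\<^sup>2 * (1 - eps\<^sup>2 * h\<^sup>2 / lam0\<^sup>2 * Gam N)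
               + g * h * (1 - eps\<^sup>2 * h\<^sup>2 / (lam0 * nu0) * Phi N),
             2 * um * (1 + eps\<^sup>2 * h\<^sup>2 / lam0\<^sup>2 * Gam N)]]"

definition SN :: "nat \<Rightarrow> real \<Rightarrow> real \<Rightarrow> real \<Rightarrow> real \<Rightarrow> real \<Rightarrow> real \<Rightarrow> real ^ 2" where
  "SN N g eps lam0 nu0 h um = vector [0,
     - nu0 / lam0 * um * (1 - eps / lam0 * Omg N * h + eps\<^sup>2 / lam0\<^sup>2 * Lam N * h\<^sup>2)]"

end

theory Submission
  imports Defs "Jordan_Normal_Form.Determinant"
begin


definition Pq :: "real poly" where "Pq = [:0, 1, -1:]"

lemma phi_alt: "phi j = Polynomial.smult (1 / fact j) ((pderiv ^^ j) (Pq ^ j))"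
  by (simp add: phi_def Pq_def)

lemma dvd_pderiv:
  fixes p :: "real poly"
  assumes "[:-a,1:]^(Suc m) dvd p" shows "[:-a,1:]^m dvd pderiv p"
proof -
  obtain q where q: "p = [:-a,1:]^(Suc m) * q" using assms by (auto elim: dvdE)
  have "pderiv p = [:-a,1:]^m * (Polynomial.smult (of_nat (Suc m)) (pderiv [:-a,1:]) * q + [:-a,1:] * pderiv q)"
    unfolding q pderiv_mult pderiv_power_Suc by (simp add: algebra_simps)
  then show ?thesis by simp
qed

lemma dvd_hpderiv:
  fixes p :: "real poly"
  assumes "[:-a,1:]^m dvd p" "k \<le> m" shows "[:-a,1:]^(m-k) dvd (pderiv^^k) p"
  using assms(2)
proof (induction k)
  case 0 then show ?case using assms(1) by simp
next
  case (Suc k)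
  then have "[:-a,1:]^(Suc (m - Suc k)) dvd (pderiv^^k) p"
    using Suc_diff_Suc[of k m] by auto
  then show ?case by (simp add: dvd_pderiv)
qed

lemma root_dvd_poly0:
  fixes p :: "real poly"
  assumes "[:-a,1:] dvd p" shows "poly p a = 0"
  using assms by (auto elim: dvdE)

lemma Pq_fact0: "Pq = [:-0,1:] * [:1,-1:]"
  by (simp add: Pq_def)
lemma Pq_fact1: "Pq = [:-1,1:] * [:0,-1:]"
  by (simp add: Pq_def)

lemma hpd_zero:
  assumes "k < i" "a = 0 \<or> a = 1"
  shows "poly ((pderiv^^k) (Pq ^ i)) a = 0"
proof -
  have "[:-a,1:]^i dvd Pq ^ i"
    using assms(2) Pq_fact0 Pq_fact1 by (metis dvd_triv_left power_mult_distrib)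
  then have "[:-a,1:]^(i-k) dvd (pderiv^^k) (Pq ^ i)"
    using assms(1) by (intro dvd_hpderiv) auto
  moreover have "[:-a,1:] dvd [:-a,1:]^(i-k)" using assms(1)
    by (metis dvd_power zero_less_diff)
  ultimately show ?thesis by (meson dvd_trans root_dvd_poly0)
qed

lemma coeff_Pq_pow: "Polynomial.coeff (Pq ^ i) i = 1"
proof -
  have e: "Pq = Polynomial.monom 1 1 * [:1,-1:]"
    by (simp add: Pq_def monom_altdef)
  have "Pq ^ i = Polynomial.monom 1 i * [:1,-1:]^i"
    unfolding e power_mult_distrib by (simp add: monom_altdef power_mult_distrib)
  then show ?thesis by (simp add: coeff_monom_mult coeff_0_power)
qed
lemma phi_at0: "poly (phi i) 0 = 1"
proof -
  have "poly (phi i) 0 = Polynomial.coeff (phi i) 0" by (simp add: poly_0_coeff_0)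
  also have "... = 1 / fact i * (pochhammer 1 i * Polynomial.coeff (Pq ^ i) i)"
    by (simp add: phi_alt coeff_higher_pderiv)
  also have "... = 1" by (simp add: coeff_Pq_pow flip: pochhammer_fact)
  finally show ?thesis .
qed

lemma degPq: "Polynomial.degree Pq = 2" by (simp add: Pq_def)

lemma coeff_phi: "Polynomial.coeff (phi k) n = 1 / fact k * (pochhammer (of_nat (Suc n)) k * Polynomial.coeff (Pq ^ k) (n + k))"
  by (simp add: phi_alt coeff_higher_pderiv)

lemma coeff_phi_high: "n > k \<Longrightarrow> Polynomial.coeff (phi k) n = 0"
proof -
  assume "n > k"
  have "Polynomial.degree (Pq ^ k) \<le> 2 * k" using degree_power_le[of Pq k] degPq by simp
  then have "Polynomial.coeff (Pq ^ k) (n + k) = 0" using \<open>n > k\<close> by (intro coeff_eq_0) simp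
  then show ?thesis by (simp add: coeff_phi)
qed

lemma coeff_phi_top: "Polynomial.coeff (phi k) k \<noteq> 0"
proof -
  have "Pq \<noteq> 0" using degPq by auto
  then have d: "Polynomial.degree (Pq ^ k) = k + k" using degree_power_eq[of Pq k] degPq by simp
  have "Polynomial.coeff (Pq ^ k) (k + k) = Polynomial.lead_coeff (Pq ^ k)" by (simp add: d)
  also have "... = (-1) ^ k" by (simp add: lead_coeff_power degPq) (simp add: Pq_def numeral_2_eq_2)
  finally have "Polynomial.coeff (Pq ^ k) (k + k) \<noteq> 0" by simp
  moreover have "pochhammer (of_nat (Suc k)) k \<noteq> (0::real)"
    by (simp add: pochhammer_eq_0_iff)
  ultimately show ?thesis by (simp add: coeff_phi)
qed

lemma coeff_dphi_high: "n \<ge> k \<Longrightarrow> Polynomial.coeff (pderiv (phi k)) n = 0"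
  by (simp add: coeff_pderiv coeff_phi_high)

lemma coeff_dphi_top: "k \<ge> 1 \<Longrightarrow> Polynomial.coeff (pderiv (phi k)) (k - 1) \<noteq> 0"
  using coeff_phi_top[of k] by (simp add: coeff_pderiv)

lemma lin_indep:
  "(\<Sum>k=1..N. Polynomial.smult (v k) (pderiv (phi k))) = 0 \<Longrightarrow> \<forall>k\<in>{1..N}. v k = 0"
proof (induction N)
  case 0 then show ?case by simp
next
  case (Suc N)
  have "Polynomial.coeff (\<Sum>k=1..Suc N. Polynomial.smult (v k) (pderiv (phi k))) N = 0" using Suc.prems by simp
  moreover have "Polynomial.coeff (\<Sum>k=1..N. Polynomial.smult (v k) (pderiv (phi k))) N = 0"
    by (simp add: coeff_sum coeff_dphi_high)
  ultimately have "v (Suc N) * Polynomial.coeff (pderiv (phi (Suc N))) N = 0" by simp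
  moreover have "Polynomial.coeff (pderiv (phi (Suc N))) N \<noteq> 0" using coeff_dphi_top[of "Suc N"] by simp
  ultimately have vN: "v (Suc N) = 0" by simp
  then have "(\<Sum>k=1..N. Polynomial.smult (v k) (pderiv (phi k))) = 0" using Suc.prems by simp
  then show ?case using Suc.IH vN by (auto simp: le_Suc_eq)
qed
lemma intpoly: "(\<lambda>z. poly p z) integrable_on {0..1::real}"
  by (intro integrable_continuous_interval continuous_on_poly continuous_on_id)

lemma ftc_poly: "integral {0..1} (\<lambda>z. poly (pderiv G) z) = poly G 1 - poly G (0::real)"
proof -
  have "((\<lambda>z. poly (pderiv G) z) has_integral (poly G 1 - poly G 0)) {0..1}"
    by (intro fundamental_theorem_of_calculus)
      (auto intro!: DERIV_subset[OF poly_DERIV] simp: has_real_derivative_iff_has_vector_derivative[symmetric])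
  then show ?thesis by (rule integral_unique)
qed

lemma key_int:
  assumes "i \<ge> 1"
  shows "integral {0..1} (\<lambda>z. poly (pderiv (phi i) * [:-1,1:]) z) = 1"
proof -
  define F where "F = Polynomial.smult (1 / fact i) ((pderiv^^(i-1)) (Pq ^ i))"
  have "pderiv F = phi i"
  proof -
    have "pderiv ((pderiv^^(i-1)) (Pq ^ i)) = (pderiv^^i) (Pq ^ i)"
      using assms by (metis Suc_diff_1 funpow.simps(2) le_less_trans comp_apply less_numeral_extra(1) not_less_eq)
    then show ?thesis by (simp add: F_def phi_alt pderiv_smult)
  qed
  define G where "G = phi i * [:-1,1:] - F"
  have "pderiv G = pderiv (phi i) * [:-1,1:]"
    by (simp add: G_def pderiv_diff pderiv_mult \<open>pderiv F = phi i\<close> pderiv_pCons)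
  moreover have "poly F 1 = 0" "poly F 0 = 0"
    using hpd_zero[of "i-1" i] assms by (auto simp: F_def)
  ultimately show ?thesis using ftc_poly[of G] by (simp add: G_def phi_at0)
qed

lemma phi1: "pderiv (phi 1) = [:-2:]"
  by (simp add: phi_def pderiv_pCons)
lemma phi2: "pderiv (phi 2) = [:-6, 12:]"
  by (simp add: phi_def pderiv_pCons numeral_2_eq_2 pderiv_mult)

lemma Cent_poly: "Cent i j = integral {0..1} (\<lambda>z. poly (pderiv (phi i) * pderiv (phi j)) z)"
  by (simp add: Cent_def)

lemma Cent_sym: "Cent i j = Cent j i"
  by (simp add: Cent_def mult.commute)

lemma Cy: "i \<ge> 1 \<Longrightarrow> Cent i 1 * (1/4) + Cent i 2 * (1/12) = 1"
proof -
  assume i: "i \<ge> 1"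
  have "Cent i 1 * (1/4) + Cent i 2 * (1/12) =
     integral {0..1} (\<lambda>z. poly (pderiv (phi i) * pderiv (phi 1)) z * (1/4) + poly (pderiv (phi i) * pderiv (phi 2)) z * (1/12))"
    unfolding Cent_poly by (subst integral_add) (simp_all add: intpoly integrable_on_mult_left del: poly_mult)
  also have "... = integral {0..1} (\<lambda>z. poly (pderiv (phi i) * [:-1,1:]) z)"
    by (intro integral_cong) (simp add: phi1 phi1[simplified] phi2 algebra_simps)
  finally show ?thesis using key_int[OF i] by simp
qed
lemma poly_zero_on_01:
  fixes q :: "real poly"
  assumes "\<forall>z\<in>{0..1}. poly q z = 0" shows "q = 0"
proof (rule ccontr)
  assume "q \<noteq> 0"
  then have "finite {x. poly q x = 0}" by (rule poly_roots_finite)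
  moreover have "{0..1::real} \<subseteq> {x. poly q x = 0}" using assms by auto
  ultimately have "finite {0..1::real}" by (rule finite_subset[rotated])
  then show False by (simp add: infinite_Icc)
qed

lemma C_inj:
  assumes "\<forall>i\<in>{1..N}. (\<Sum>k=1..N. Cent i k * v k) = 0"
  shows "\<forall>k\<in>{1..N}. v k = 0"
proof -
  define q where "q = (\<Sum>k=1..N. Polynomial.smult (v k) (pderiv (phi k)))"
  have rowi: "(\<Sum>k=1..N. Cent i k * v k) = integral {0..1} (\<lambda>z. poly (pderiv (phi i) * q) z)" for i
  proof -
    have "(\<Sum>k=1..N. Cent i k * v k) = (\<Sum>k=1..N. integral {0..1} (\<lambda>z. poly (pderiv (phi i) * pderiv (phi k)) z * v k))"
      unfolding Cent_poly by (simp del: poly_mult)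
    also have "... = integral {0..1} (\<lambda>z. \<Sum>k=1..N. poly (pderiv (phi i) * pderiv (phi k)) z * v k)"
      by (subst integral_sum) (auto simp: intpoly integrable_on_mult_left simp del: poly_mult)
    also have "... = integral {0..1} (\<lambda>z. poly (pderiv (phi i) * q) z)"
      by (simp add: q_def poly_sum sum_distrib_left algebra_simps)
    finally show ?thesis .
  qed
  have "0 = (\<Sum>i=1..N. v i * integral {0..1} (\<lambda>z. poly (pderiv (phi i) * q) z))"
    using assms rowi by simp
  also have "... = integral {0..1} (\<lambda>z. \<Sum>i=1..N. v i * poly (pderiv (phi i) * q) z)"
    by (subst integral_sum) (auto simp: intpoly integrable_on_mult_right simp del: poly_mult)
  also have "... = integral {0..1} (\<lambda>z. poly (q * q) z)"
    by (simp add: q_def poly_sum sum_distrib_left sum_distrib_right algebra_simps)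
  finally have "((\<lambda>z. poly (q * q) z) has_integral 0) (cbox 0 1)"
    using intpoly[of "q*q"] by (metis box_real(2) has_integral_integral)
  then have "\<forall>z\<in>{0..1}. poly (q*q) z = 0"
    by (intro ballI has_integral_0_cbox_imp_0[of 0 1 "\<lambda>z. poly (q * q) z"])
      (auto intro!: continuous_intros)
  then have "q = 0" by (intro poly_zero_on_01) simp
  then show ?thesis using lin_indep[of v N] by (simp add: q_def)
qed


lemma shift1: "(\<Sum>k=1..N. f k) = (\<Sum>k<N. f (Suc k))"
  by (metis One_nat_def sum.atLeast1_atMost_eq)

lemma inv_exists:
  fixes M :: "nat \<Rightarrow> nat \<Rightarrow> real"
  assumes inj: "\<And>v. \<forall>i\<in>{1..N}. (\<Sum>k=1..N. M i k * v k) = 0 \<Longrightarrow> \<forall>k\<in>{1..N}. v k = 0"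
  shows "\<exists>X. (\<forall>i j. (i \<notin> {1..N} \<or> j \<notin> {1..N}) \<longrightarrow> X i j = 0) \<and>
      (\<forall>i\<in>{1..N}. \<forall>j\<in>{1..N}. (\<Sum>k=1..N. M i k * X k j) = (if i = j then 1 else 0))"
proof -
  define A where "A = mat N N (\<lambda>(i,j). M (Suc i) (Suc j))"
  have A: "A \<in> carrier_mat N N" by (simp add: A_def)
  have "det A \<noteq> 0"
  proof
    assume "det A = 0"
    then obtain v where v: "v \<in> carrier_vec N" "v \<noteq> 0\<^sub>v N" "A *\<^sub>v v = 0\<^sub>v N"
      using det_0_iff_vec_prod_zero_field[OF A] by auto
    define w where "w k = (if k \<in> {1..N} then v $ (k - 1) else 0)" for k
    have "\<forall>i\<in>{1..N}. (\<Sum>k=1..N. M i k * w k) = 0"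
    proof
      fix i assume i: "i \<in> {1..N}"
      have "(\<Sum>k=1..N. M i k * w k) = (\<Sum>k<N. M i (Suc k) * v $ k)"
        unfolding shift1 by (intro sum.cong) (auto simp: w_def)
      also have "... = (A *\<^sub>v v) $ (i - 1)"
        using i v(1) by (auto simp: A_def mult_mat_vec_def scalar_prod_def intro!: sum.cong)
      also have "... = 0" using v(3) i by auto
      finally show "(\<Sum>k=1..N. M i k * w k) = 0" .
    qed
    then have "\<forall>k\<in>{1..N}. w k = 0" by (rule inj)
    then have "v = 0\<^sub>v N"
      using v(1) by (intro eq_vecI) (auto simp: w_def dest!: bspec[of _ _ "Suc _"])
    then show False using v(2) by simp
  qed
  from det_non_zero_imp_unit[OF A this, of "()"]
  obtain B where B: "B \<in> carrier_mat N N" "A * B = 1\<^sub>m N"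
    unfolding Units_def ring_mat_def by auto
  define X where "X i j = (if i \<in> {1..N} \<and> j \<in> {1..N} then B $$ (i - 1, j - 1) else 0)" for i j
  have "\<forall>i\<in>{1..N}. \<forall>j\<in>{1..N}. (\<Sum>k=1..N. M i k * X k j) = (if i = j then 1 else 0)"
  proof (intro ballI)
    fix i j assume i: "i \<in> {1..N}" and j: "j \<in> {1..N}"
    have "(\<Sum>k=1..N. M i k * X k j) = (\<Sum>k<N. M i (Suc k) * B $$ (k, j - 1))"
      unfolding shift1 by (intro sum.cong) (use j in \<open>auto simp: X_def\<close>)
    also have "... = (A * B) $$ (i - 1, j - 1)"
      using i j B(1) by (auto simp: A_def times_mat_def scalar_prod_def intro!: sum.cong)
    also have "... = (if i = j then 1 else 0)" using B(2) i j by auto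
    finally show "(\<Sum>k=1..N. M i k * X k j) = (if i = j then 1 else 0)" .
  qed
  then show ?thesis by (intro exI[of _ X]) (auto simp: X_def)
qed

lemma mat_inv_props:
  fixes M :: "nat \<Rightarrow> nat \<Rightarrow> real"
  assumes inj: "\<And>v. \<forall>i\<in>{1..N}. (\<Sum>k=1..N. M i k * v k) = 0 \<Longrightarrow> \<forall>k\<in>{1..N}. v k = 0"
  shows "(\<forall>i j. (i \<notin> {1..N} \<or> j \<notin> {1..N}) \<longrightarrow> mat_inv N M i j = 0) \<and>
      (\<forall>i\<in>{1..N}. \<forall>j\<in>{1..N}. (\<Sum>k=1..N. M i k * mat_inv N M k j) = (if i = j then 1 else 0))"
proof -
  define Q where "Q X = ((\<forall>i j. (i \<notin> {1..N} \<or> j \<notin> {1..N}) \<longrightarrow> X i j = 0) \<and>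
      (\<forall>i\<in>{1..N}. \<forall>j\<in>{1..N}. (\<Sum>k=1..N. M i k * X k j) = (if i = j then 1 else 0)))"
    for X :: "nat \<Rightarrow> nat \<Rightarrow> real"
  have ex: "\<exists>X. Q X" unfolding Q_def by (rule inv_exists[OF inj])
  have un: "X = Y" if X: "Q X" and Y: "Q Y" for X Y
  proof -
    have "X i j = Y i j" for i j
    proof (cases "i \<in> {1..N} \<and> j \<in> {1..N}")
      case True
      have "\<forall>i\<in>{1..N}. (\<Sum>k=1..N. M i k * (X k j - Y k j)) = 0"
        using X Y True unfolding Q_def by (simp add: right_diff_distrib sum_subtractf)
      then have "\<forall>k\<in>{1..N}. X k j - Y k j = 0" by (rule inj)
      then show ?thesis using True by auto
    next
      case False
      then have "X i j = 0" "Y i j = 0" using X Y unfolding Q_def by simp_all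
      then show ?thesis by simp
    qed
    then show "X = Y" by (intro ext)
  qed
  have "\<exists>!X. Q X" using ex un by blast
  then have "Q (THE X. Q X)" by (rule theI')
  moreover have "mat_inv N M = (THE X. Q X)" unfolding mat_inv_def Q_def ..
  ultimately show ?thesis unfolding Q_def by simp
qed

definition yv :: "nat \<Rightarrow> real" where
  "yv j = (if j = 1 then 1/4 else if j = 2 then 1/12 else 0)"

lemma sum12:
  fixes g :: "nat \<Rightarrow> real"
  assumes "N \<ge> 2" "\<And>j. j \<noteq> 1 \<Longrightarrow> j \<noteq> 2 \<Longrightarrow> g j = 0"
  shows "(\<Sum>j=1..N. g j) = g 1 + g 2"
proof -
  have "(\<Sum>j=1..N. g j) = (\<Sum>j\<in>{1,2}. g j)"
    using assms by (intro sum.mono_neutral_right) auto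
  then show ?thesis by simp
qed

lemma Cy_sum: "i \<ge> 1 \<Longrightarrow> N \<ge> 2 \<Longrightarrow> (\<Sum>j=1..N. Cent i j * yv j) = 1"
  using Cy[of i] by (subst sum12) (auto simp: yv_def)

lemma Cinv_props:
  "(\<forall>i j. (i \<notin> {1..N} \<or> j \<notin> {1..N}) \<longrightarrow> Cinv N i j = 0) \<and>
   (\<forall>i\<in>{1..N}. \<forall>j\<in>{1..N}. (\<Sum>k=1..N. Cent i k * Cinv N k j) = (if i = j then 1 else 0))"
  unfolding Cinv_def Cmat_def by (rule mat_inv_props) (rule C_inj)

lemma Ct_inj:
  assumes "\<forall>i\<in>{1..N}. (\<Sum>k=1..N. Ctilde i k * v k) = 0"
  shows "\<forall>k\<in>{1..N}. v k = 0"
proof (rule C_inj, intro ballI)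
  fix i assume "i \<in> {1..N}"
  then have "(2 * real i + 1) * (\<Sum>k=1..N. Cent i k * v k) = 0"
    using assms by (simp add: Ctilde_def sum_distrib_left mult.assoc)
  moreover have "2 * real i + 1 \<noteq> 0" by (simp add: add_nonneg_eq_0_iff)
  ultimately show "(\<Sum>k=1..N. Cent i k * v k) = 0" by simp
qed

lemma Ctinv_props:
  "(\<forall>i j. (i \<notin> {1..N} \<or> j \<notin> {1..N}) \<longrightarrow> Ctinv N i j = 0) \<and>
   (\<forall>i\<in>{1..N}. \<forall>j\<in>{1..N}. (\<Sum>k=1..N. Ctilde i k * Ctinv N k j) = (if i = j then 1 else 0))"
  unfolding Ctinv_def by (rule mat_inv_props) (rule Ct_inj)

lemma Btil_eq:
  assumes N: "N \<ge> 2" shows "\<forall>i\<in>{1..N}. Btil N i = yv i"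
proof -
  have "\<forall>i\<in>{1..N}. (\<Sum>k=1..N. Cent i k * (Btil N k - yv k)) = 0"
  proof
    fix i assume i: "i \<in> {1..N}"
    have "(\<Sum>k=1..N. Cent i k * Btil N k) = (\<Sum>j=1..N. \<Sum>k=1..N. Cent i k * Cinv N k j)"
      unfolding Btil_def sum_distrib_left by (rule sum.swap)
    also have "... = (\<Sum>j=1..N. (if i = j then 1 else 0))"
      using Cinv_props[of N] i by (intro sum.cong) auto
    also have "... = 1" using i by simp
    finally have "(\<Sum>k=1..N. Cent i k * Btil N k) = 1" .
    moreover have "(\<Sum>k=1..N. Cent i k * yv k) = 1" using Cy_sum[of i N] i N by auto
    ultimately show "(\<Sum>k=1..N. Cent i k * (Btil N k - yv k)) = 0"
      by (simp add: right_diff_distrib sum_subtractf)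
  qed
  then have "\<forall>k\<in>{1..N}. Btil N k - yv k = 0" by (rule C_inj)
  then show ?thesis by auto
qed

lemma Ctinv_colsum:
  assumes N: "N \<ge> 2" and k: "k \<in> {1..N}"
  shows "(\<Sum>l=1..N. Ctinv N l k) = yv k / (2 * real k + 1)"
proof -
  define u where "u i = yv i / (2 * real i + 1)" for i
  have one: "(\<Sum>i=1..N. u i * Ctilde i l) = 1" if l: "l \<in> {1..N}" for l
  proof -
    have "(\<Sum>i=1..N. u i * Ctilde i l) = (\<Sum>i=1..N. Cent l i * yv i)"
      by (intro sum.cong) (auto simp: u_def Ctilde_def Cent_sym[of l] field_simps simp del: of_nat_Suc)
    also have "... = 1" using Cy_sum[of l N] l N by auto
    finally show ?thesis .
  qed
  have "(\<Sum>l=1..N. Ctinv N l k) = (\<Sum>l=1..N. (\<Sum>i=1..N. u i * Ctilde i l) * Ctinv N l k)"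
    by (rule sum.cong[OF refl]) (subst one, auto)
  also have "... = (\<Sum>i=1..N. u i * (\<Sum>l=1..N. Ctilde i l * Ctinv N l k))"
    by (simp add: sum_distrib_left sum_distrib_right mult.assoc) (rule sum.swap)
  also have "... = (\<Sum>i=1..N. u i * (if i = k then 1 else 0))"
    using Ctinv_props[of N] k by (intro sum.cong) auto
  also have "... = u k" using k by (simp add: if_distrib cong: if_cong)
  finally show ?thesis by (simp add: u_def)
qed

definition cG :: real where "cG = (1/4)^2 / 3 + (1/12)^2 / 5"

lemma Gam_val: "N \<ge> 2 \<Longrightarrow> Gam N = cG"
proof -
  assume N: "N \<ge> 2"
  have "Gam N = (\<Sum>j=1..N. (yv j)\<^sup>2 / (2 * real j + 1))"
    unfolding Gam_def using Btil_eq[OF N] by (intro sum.cong) auto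
  also have "... = cG" using N by (subst sum12) (auto simp: yv_def cG_def)
  finally show ?thesis .
qed

lemma Omg_val: "N \<ge> 2 \<Longrightarrow> Omg N = 1/3"
proof -
  assume N: "N \<ge> 2"
  have "Omg N = (\<Sum>j=1..N. yv j)"
    unfolding Omg_def using Btil_eq[OF N] by (intro sum.cong) auto
  also have "... = 1/3" using N by (subst sum12) (auto simp: yv_def)
  finally show ?thesis .
qed

lemma Phi_val: "N \<ge> 2 \<Longrightarrow> Phi N = cG"
proof -
  assume N: "N \<ge> 2"
  have "Phi N = (\<Sum>i=1..N. \<Sum>k=1..N. Ctinv N i k * Btil N k)"
    unfolding Phi_def Ftil_def mat_mul_def Btil_def
    by (rule sum.cong[OF refl], simp add: sum_distrib_left, rule sum.swap)
  also have "... = (\<Sum>i=1..N. \<Sum>k=1..N. Ctinv N i k * yv k)"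
    using Btil_eq[OF N] by (intro sum.cong refl) auto
  also have "... = (\<Sum>k=1..N. yv k * (\<Sum>i=1..N. Ctinv N i k))"
    by (subst sum.swap) (simp add: sum_distrib_left mult.commute)
  also have "... = (\<Sum>k=1..N. (yv k)\<^sup>2 / (2 * real k + 1))"
    using Ctinv_colsum[OF N] by (intro sum.cong refl) (simp add: power2_eq_square)
  also have "... = cG" using N by (subst sum12) (auto simp: yv_def cG_def)
  finally show ?thesis .
qed

lemma Lam_val: "N \<ge> 2 \<Longrightarrow> Lam N = - cG + 1/3 * (1/3)"
proof -
  assume N: "N \<ge> 2"
  have "Lam N = (\<Sum>i=1..N. - Ftil N i + (\<Sum>k=1..N. \<Sum>l=1..N. Cinv N k l) * Btil N i)"
    unfolding Lam_def Dtil_def Ftil_def Btil_def ..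
  also have "... = - Phi N + (\<Sum>k=1..N. \<Sum>l=1..N. Cinv N k l) * Omg N"
    unfolding Phi_def Omg_def by (simp only: sum.distrib sum_negf sum_distrib_left)
  also have "(\<Sum>k=1..N. \<Sum>l=1..N. Cinv N k l) = Omg N" by (simp add: Omg_def Btil_def)
  finally show ?thesis using Phi_val[OF N] Omg_val[OF N] by simp
qed

theorem theorem3:
  fixes g eps lam0 nu0 :: real and N :: nat
  assumes "g > 0" and "eps > 0" and "lam0 > 0" and "nu0 > 0" and "N \<ge> 2"
  shows "(\<forall>h um. h > 0 \<longrightarrow>
            AN N g eps lam0 nu0 h um = AN 2 g eps lam0 nu0 h um \<and>
            SN N g eps lam0 nu0 h um = SN 2 g eps lam0 nu0 h um)
         \<and> Gam N = Gam 2 \<and> Phi N = Phi 2 \<and> Omg N = Omg 2 \<and> Lam N = Lam 2"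
proof -
  have e: "Gam N = Gam 2" "Phi N = Phi 2" "Omg N = Omg 2" "Lam N = Lam 2"
    using assms(5) by (simp_all add: Gam_val Phi_val Omg_val Lam_val)
  then show ?thesis by (simp add: AN_def SN_def)
qed

end
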